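(* Let $n\ge1$ and let $\lambda$ be a partition with $\ell(\lambda)\le n$. Then \[ \mathrm{sp}^{(n-1,1)}_{\lambda}(x_1,\dots,x_{n-1}\mid x_n)=\mathrm{spo}_{\lambda}\left(x_1,\dots,x_{n-1},x_n^{-1};\,-x_n^{-1}\right). \]
   Context: An $(n-1,1)$-symplectic tableau of shape $\lambda$ is a filling of the Young diagram of $\lambda$ with entries from $1<\bar1<2<\bar2<\cdots<n-1<\overline{n-1}<n$ such that entries weakly increase along rows, strictly increase down columns, and the entries of row $i$ are $\ge i$. Its weight is $x_n^{\#n}\prod_{i=1}^{n-1}x_i^{\#i-\#\bar i}$. The odd symplectic character $\mathrm{sp}^{(n-1,1)}_\lambda(x_1,\dots,x_{n-1}\mid x_n)$ is the sum of weights of all such tableaux. Orthosymplectic Schur function $\mathrm{spo}_\lambda(X;Y)$ for $X=(x_1,\dots,x_n)$, $Y=(y_1,\dots,y_m)$ (here $m=1$): order $1<\bar1<\cdots<n<\bar n<1'<\cdots<m'$; an orthosymplectic tableau of shape $\lambda$ is a filling such that the entries from $\{1,\bar1,\dots,n,\bar n\}$ form a symplectic tableau (weakly increasing along rows, strictly increasing down columns, entries in row $i$ are $\ge i$) and the remaining primed entries form a skew filling strictly increasing along rows and weakly increasing down columns; weight $\prod_i x_i^{\#i-\#\bar i}\prod_j y_j^{\#j'}$; $\mathrm{spo}_\lambda$ is the sum of weights. *)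

theory Defs
  imports Main
begin

definition is_partition :: "nat list \<Rightarrow> bool" where
  "is_partition lam \<longleftrightarrow> sorted (rev lam) \<and> 0 \<notin> set lam"

text \<open>Young diagram, 0-indexed cells (row, column).\<close>
definition diagram :: "nat list \<Rightarrow> (nat \<times> nat) set" where
  "diagram lam = {(i, j). i < length lam \<and> j < lam ! i}"

text \<open>Encoding of letters by positive naturals respecting the order:
  the unbarred letter k is coded 2k-1, the barred letter k-bar is coded 2k.
  In the orthosymplectic alphabet with n unprimed indices the primed letter j'
  is coded 2n+j.\<close>

definition cnt :: "(nat \<times> nat \<Rightarrow> nat) \<Rightarrow> nat list \<Rightarrow> nat \<Rightarrow> nat" where
  "cnt T lam a = card {c \<in> diagram lam. T c = a}"

text \<open>(n-1,1)-symplectic tableaux of shape lam: alphabet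
  1 < 1bar < ... < n-1 < (n-1)bar < n, i.e. codes 1 .. 2n-1.
  Row i (1-indexed) entries are >= the letter i (code 2i-1); with 0-indexed
  row r this is code >= 2r+1.\<close>
definition odd_sp_tableaux :: "nat \<Rightarrow> nat list \<Rightarrow> (nat \<times> nat \<Rightarrow> nat) set" where
  "odd_sp_tableaux n lam = {T.
     (\<forall>c. c \<notin> diagram lam \<longrightarrow> T c = 0) \<and>
     (\<forall>c\<in>diagram lam. 1 \<le> T c \<and> T c \<le> 2 * n - 1) \<and>
     (\<forall>i j. (i, Suc j) \<in> diagram lam \<longrightarrow> T (i, j) \<le> T (i, Suc j)) \<and>
     (\<forall>i j. (Suc i, j) \<in> diagram lam \<longrightarrow> T (i, j) < T (Suc i, j)) \<and>
     (\<forall>i j. (i, j) \<in> diagram lam \<longrightarrow> 2 * i + 1 \<le> T (i, j))}"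

definition odd_sp_weight :: "nat \<Rightarrow> nat list \<Rightarrow> (nat \<Rightarrow> 'a::field) \<Rightarrow> (nat \<times> nat \<Rightarrow> nat) \<Rightarrow> 'a" where
  "odd_sp_weight n lam x T =
     x n ^ cnt T lam (2 * n - 1) *
     (\<Prod>i\<in>{1..<n}. x i powi (int (cnt T lam (2 * i - 1)) - int (cnt T lam (2 * i))))"

definition odd_sp :: "nat \<Rightarrow> nat list \<Rightarrow> (nat \<Rightarrow> 'a::field) \<Rightarrow> 'a" where
  "odd_sp n lam x = (\<Sum>T\<in>odd_sp_tableaux n lam. odd_sp_weight n lam x T)"

text \<open>Orthosymplectic tableaux for X = (x_1..x_n), Y = (y_1..y_m): codes 1..2n are
  the symplectic letters 1 < 1bar < ... < n < nbar, codes 2n+1..2n+m are 1' < ... < m'.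
  The unprimed entries form a symplectic tableau of a shape mu contained in lam
  and the primed entries fill lam/mu, strictly increasing along rows and weakly
  down columns.  This is expressed as: all entries weakly increase along rows and
  down columns (which forces the unprimed cells to form a Young diagram mu and the
  primed cells the skew shape lam/mu), unprimed entries strictly increase down
  columns and satisfy the row condition, primed entries strictly increase along rows.\<close>
definition spo_tableaux :: "nat \<Rightarrow> nat \<Rightarrow> nat list \<Rightarrow> (nat \<times> nat \<Rightarrow> nat) set" where
  "spo_tableaux n m lam = {T.
     (\<forall>c. c \<notin> diagram lam \<longrightarrow> T c = 0) \<and>
     (\<forall>c\<in>diagram lam. 1 \<le> T c \<and> T c \<le> 2 * n + m) \<and>
     (\<forall>i j. (i, Suc j) \<in> diagram lam \<longrightarrow> T (i, j) \<le> T (i, Suc j)) \<and>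
     (\<forall>i j. (Suc i, j) \<in> diagram lam \<longrightarrow> T (i, j) \<le> T (Suc i, j)) \<and>
     (\<forall>i j. (Suc i, j) \<in> diagram lam \<longrightarrow> T (Suc i, j) \<le> 2 * n \<longrightarrow> T (i, j) < T (Suc i, j)) \<and>
     (\<forall>i j. (i, j) \<in> diagram lam \<longrightarrow> T (i, j) \<le> 2 * n \<longrightarrow> 2 * i + 1 \<le> T (i, j)) \<and>
     (\<forall>i j. (i, Suc j) \<in> diagram lam \<longrightarrow> 2 * n < T (i, j) \<longrightarrow> T (i, j) < T (i, Suc j))}"

definition spo_weight :: "nat \<Rightarrow> nat \<Rightarrow> nat list \<Rightarrow> (nat \<Rightarrow> 'a::field) \<Rightarrow> (nat \<Rightarrow> 'a) \<Rightarrow> (nat \<times> nat \<Rightarrow> nat) \<Rightarrow> 'a" where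
  "spo_weight n m lam x y T =
     (\<Prod>i\<in>{1..n}. x i powi (int (cnt T lam (2 * i - 1)) - int (cnt T lam (2 * i)))) *
     (\<Prod>j\<in>{1..m}. y j ^ cnt T lam (2 * n + j))"

definition spo :: "nat \<Rightarrow> nat \<Rightarrow> nat list \<Rightarrow> (nat \<Rightarrow> 'a::field) \<Rightarrow> (nat \<Rightarrow> 'a) \<Rightarrow> 'a" where
  "spo n m lam x y = (\<Sum>T\<in>spo_tableaux n m lam. spo_weight n m lam x y T)"

end

theory Submission imports Defs "HOL-Library.Disjoint_Sets" begin

definition lv :: "nat list \<Rightarrow> nat \<Rightarrow> nat" where
  "lv lam i = (if i < length lam then lam ! i else 0)"

lemma diag_iff: "(i, j) \<in> diagram lam \<longleftrightarrow> j < lv lam i"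
  by (auto simp: diagram_def lv_def)

lemma lv_mono: "is_partition lam \<Longrightarrow> i \<le> i' \<Longrightarrow> lv lam i' \<le> lv lam i"
  by (auto simp: lv_def is_partition_def intro: sorted_rev_nth_mono)

lemma lv_pos: "is_partition lam \<Longrightarrow> i < length lam \<Longrightarrow> 0 < lv lam i"
  by (auto simp: lv_def is_partition_def) (metis gr0I nth_mem)

lemma finite_diagram: "finite (diagram lam)"
proof -
  have "diagram lam = Sigma {..<length lam} (\<lambda>i. {..<lam ! i})"
    by (auto simp: diagram_def)
  thus ?thesis by auto
qed

lemma prefix_ex:
  fixes m :: nat and f :: "nat \<Rightarrow> nat"
  shows "(\<And>j j'. j \<le> j' \<Longrightarrow> j' < m \<Longrightarrow> f j \<le> (f j' :: nat)) \<Longrightarrow>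
   \<exists>q\<le>m. {j. j < m \<and> f j \<le> k} = {..<q}"
proof (induction m)
  case 0 then show ?case by auto
next
  case (Suc m)
  then obtain q where q: "q \<le> m" "{j. j < m \<and> f j \<le> k} = {..<q}" by force
  show ?case
  proof (cases "f m \<le> k")
    case True
    have "{j. j < Suc m \<and> f j \<le> k} = {..<Suc m}"
      using True Suc.prems by (auto simp: less_Suc_eq_le) (meson le_refl order_trans)
    then show ?thesis by blast
  next
    case False
    have "{j. j < Suc m \<and> f j \<le> k} = {j. j < m \<and> f j \<le> k}"
      using False by (auto simp: less_Suc_eq)
    then show ?thesis using q(1) q(2) le_Suc_eq by blast
  qed
qed

lemma prefix_card:
  fixes m :: nat and f :: "nat \<Rightarrow> nat"
  assumes "\<And>j j'. j \<le> j' \<Longrightarrow> j' < m \<Longrightarrow> f j \<le> (f j' :: nat)"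
  shows "{j. j < m \<and> f j \<le> k} = {..<card {j. j < m \<and> f j \<le> k}}"
    and "card {j. j < m \<and> f j \<le> k} \<le> m"
  using prefix_ex[where f=f and m=m and k=k, OF assms] by (metis card_lessThan)+


lemma le_of_lt: "(\<And>j::nat. j < x \<Longrightarrow> j < y) \<Longrightarrow> x \<le> y"
  by (meson leI less_irrefl)

lemma aux_sign0: "(i::'a::field) \<noteq> 0 \<Longrightarrow> l * (P / i) * (q * (- i)) = - (l * P * q)"
  by (simp add: field_simps)

lemma aux_sign: "(i::'a::field) \<noteq> 0 \<Longrightarrow> l * i powi (a - 1) * (q * (- i)) = - (l * i powi a * q)"
proof -
  assume i: "i \<noteq> 0"
  have "i powi (a - 1) = i powi a / i" using i by (simp add: power_int_diff)
  then show ?thesis using aux_sign0[OF i] by simp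
qed

lemma aux_inv: "(inverse (y::'a::field)) powi (- int k) = y ^ k"
  by (simp add: power_int_minus power_inverse)

lemma tele_aux:
  fixes a b :: "nat \<Rightarrow> nat"
  shows "(\<Sum>i<Suc k. max (a i) (b (Suc i)) + (if i = 0 then b 0 else min (a (i - 1)) (b i)))
     + min (a k) (b (Suc k)) = (\<Sum>i<Suc k. a i + b i) + b (Suc k)"
proof (induction k)
  case 0 then show ?case by (simp add: max_def min_def)
next
  case (Suc k)
  have e: "max (a (Suc k)) (b (Suc (Suc k))) + min (a (Suc k)) (b (Suc (Suc k)))
       = a (Suc k) + b (Suc (Suc k))" by (simp add: max_def min_def)
  show ?case using Suc e by (simp add: sum.lessThan_Suc)
qed

lemma tele:
  fixes a b :: "nat \<Rightarrow> nat"
  assumes "b m = 0"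
  shows "(\<Sum>i<m. max (a i) (b (Suc i)) + (if i = 0 then b 0 else min (a (i - 1)) (b i)))
     = (\<Sum>i<m. a i + b i)"
proof (cases m)
  case 0 then show ?thesis by simp
next
  case (Suc k) then show ?thesis using tele_aux[of a b k] assms by simp
qed

locale Stp =
  fixes n :: nat and lam :: "nat list"
  assumes n1: "1 \<le> n" and part: "is_partition lam" and len: "length lam \<le> n"
begin

abbreviation "D \<equiv> diagram lam"
abbreviation "SP \<equiv> spo_tableaux n 1 lam"
abbreviation "N \<equiv> 2 * n - 1"

lemma N_eqs: "2 * n = Suc N" "2 * n + 1 = Suc (Suc N)" "1 \<le> N"
  using n1 by auto

lemma spoD:
  assumes "T \<in> SP"
  shows spo_out: "(i, j) \<notin> D \<Longrightarrow> T (i, j) = 0"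
    and spo_range: "(i, j) \<in> D \<Longrightarrow> 1 \<le> T (i, j) \<and> T (i, j) \<le> Suc (Suc N)"
    and spo_row: "(i, Suc j) \<in> D \<Longrightarrow> T (i, j) \<le> T (i, Suc j)"
    and spo_col: "(Suc i, j) \<in> D \<Longrightarrow> T (i, j) \<le> T (Suc i, j)"
    and spo_colstrict: "(Suc i, j) \<in> D \<Longrightarrow> T (Suc i, j) \<le> Suc N \<Longrightarrow> T (i, j) < T (Suc i, j)"
    and spo_rowcond: "(i, j) \<in> D \<Longrightarrow> T (i, j) \<le> Suc N \<Longrightarrow> 2 * i + 1 \<le> T (i, j)"
    and spo_primed: "(i, Suc j) \<in> D \<Longrightarrow> Suc N < T (i, j) \<Longrightarrow> T (i, j) < T (i, Suc j)"
  using assms n1 unfolding spo_tableaux_def by auto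

lemma spoI:
  assumes "\<And>c. c \<notin> D \<Longrightarrow> T c = 0"
    and "\<And>c. c \<in> D \<Longrightarrow> 1 \<le> T c \<and> T c \<le> Suc (Suc N)"
    and "\<And>i j. (i, Suc j) \<in> D \<Longrightarrow> T (i, j) \<le> T (i, Suc j)"
    and "\<And>i j. (Suc i, j) \<in> D \<Longrightarrow> T (i, j) \<le> T (Suc i, j)"
    and "\<And>i j. (Suc i, j) \<in> D \<Longrightarrow> T (Suc i, j) \<le> Suc N \<Longrightarrow> T (i, j) < T (Suc i, j)"
    and "\<And>i j. (i, j) \<in> D \<Longrightarrow> T (i, j) \<le> Suc N \<Longrightarrow> 2 * i + 1 \<le> T (i, j)"
    and "\<And>i j. (i, Suc j) \<in> D \<Longrightarrow> Suc N < T (i, j) \<Longrightarrow> T (i, j) < T (i, Suc j)"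
  shows "T \<in> SP"
  using assms n1 unfolding spo_tableaux_def by auto

lemma D_left: "(i, Suc j) \<in> D \<Longrightarrow> (i, j) \<in> D"
  by (auto simp: diag_iff)

lemma D_up: "(Suc i, j) \<in> D \<Longrightarrow> (i, j) \<in> D"
  using lv_mono[OF part, of i "Suc i"] by (auto simp: diag_iff)

lemma D_row_lt: "(i, j) \<in> D \<Longrightarrow> i < length lam"
  by (auto simp: diagram_def)

lemma spo_rowmono:
  assumes "T \<in> SP" "j \<le> j'" "j' < lv lam i"
  shows "T (i, j) \<le> T (i, j')"
  using assms(2,3)
proof (induction j' rule: dec_induct)
  case base then show ?case by simp
next
  case (step k)
  have "T (i, k) \<le> T (i, Suc k)" using spo_row[OF assms(1)] step.prems by (auto simp: diag_iff)
  with step show ?case by simp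
qed

definition rc :: "(nat \<times> nat \<Rightarrow> nat) \<Rightarrow> nat \<Rightarrow> nat \<Rightarrow> nat" where
  "rc T k i = card {j. j < lv lam i \<and> T (i, j) \<le> k}"

lemma rc_iff:
  assumes "T \<in> SP" "j < lv lam i"
  shows "T (i, j) \<le> k \<longleftrightarrow> j < rc T k i"
proof -
  have "{j. j < lv lam i \<and> T (i, j) \<le> k} = {..<rc T k i}"
    unfolding rc_def by (rule prefix_card(1)) (use spo_rowmono[OF assms(1)] in auto)
  then show ?thesis using assms(2) by blast
qed

lemma rc_le: "rc T k i \<le> lv lam i"
  unfolding rc_def by (rule order_trans[OF card_mono[of "{..<lv lam i}"]]) auto

lemma rc_mono: "k \<le> k' \<Longrightarrow> rc T k i \<le> rc T k' i"
  unfolding rc_def by (rule card_mono) auto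

lemma rc_out: "length lam \<le> i \<Longrightarrow> rc T k i = 0"
  by (simp add: rc_def lv_def)


definition "aa T i = rc T (N - 1) i"
definition "pp T i = rc T N i"
definition "bb T i = rc T (Suc N) i"
definition "LL T i = max (aa T i) (bb T (Suc i))"
definition "UU T i = (if i = 0 then bb T 0 else min (aa T (i - 1)) (bb T i))"
definition "pq T i = LL T i + UU T i - pp T i"
definition "BK T = (\<lambda>(i, j). if (i, j) \<in> D \<and> N \<le> T (i, j) \<and> T (i, j) \<le> Suc N
     then (if j < pq T i then N else Suc N) else T (i, j))"

lemma ineq_bp:
  assumes T: "T \<in> SP" shows "bb T (Suc i) \<le> pp T i"
proof (rule le_of_lt)
  fix j assume j: "j < bb T (Suc i)"
  then have d: "(Suc i, j) \<in> D" using rc_le[of T "Suc N" "Suc i"] by (auto simp: bb_def diag_iff)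
  then have "T (Suc i, j) \<le> Suc N" using rc_iff[OF T] j by (auto simp: bb_def diag_iff)
  then have "T (i, j) \<le> N" using spo_colstrict[OF T d] by auto
  moreover have "(i, j) \<in> D" using D_up[OF d] .
  ultimately show "j < pp T i" using rc_iff[OF T] by (auto simp: pp_def diag_iff)
qed

lemma ineq_pa:
  assumes T: "T \<in> SP" shows "pp T (Suc i) \<le> aa T i"
proof (rule le_of_lt)
  fix j assume j: "j < pp T (Suc i)"
  then have d: "(Suc i, j) \<in> D" using rc_le[of T N "Suc i"] by (auto simp: pp_def diag_iff)
  then have "T (Suc i, j) \<le> N" using rc_iff[OF T] j by (auto simp: pp_def diag_iff)
  then have "T (i, j) \<le> N - 1" using spo_colstrict[OF T d] by auto
  moreover have "(i, j) \<in> D" using D_up[OF d] .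
  ultimately show "j < aa T i" using rc_iff[OF T] by (auto simp: aa_def diag_iff)
qed

lemma chain:
  assumes T: "T \<in> SP"
  shows "aa T i \<le> LL T i" "LL T i \<le> pp T i" "pp T i \<le> UU T i" "UU T i \<le> bb T i"
    "LL T i \<le> pq T i" "pq T i \<le> UU T i" "aa T i \<le> pp T i" "pp T i \<le> bb T i"
proof -
  have ap: "aa T i \<le> pp T i" unfolding aa_def pp_def by (rule rc_mono) auto
  have pb: "pp T i \<le> bb T i" unfolding bb_def pp_def by (rule rc_mono) auto
  have pu: "pp T i \<le> UU T i"
  proof (cases i)
    case 0 then show ?thesis using pb by (simp add: UU_def)
  next
    case (Suc k) then show ?thesis using pb ineq_pa[OF T, of k] by (simp add: UU_def)
  qed
  have lp: "LL T i \<le> pp T i" using ap ineq_bp[OF T, of i] by (simp add: LL_def)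
  show "aa T i \<le> LL T i" by (simp add: LL_def)
  show "LL T i \<le> pp T i" by (rule lp)
  show "pp T i \<le> UU T i" by (rule pu)
  show "UU T i \<le> bb T i" by (simp add: UU_def)
  show "LL T i \<le> pq T i" "pq T i \<le> UU T i" using lp pu by (auto simp: pq_def)
  show "aa T i \<le> pp T i" "pp T i \<le> bb T i" by (fact ap, fact pb)
qed


lemma mid_iff:
  assumes T: "T \<in> SP" and d: "(i, j) \<in> D"
  shows "T (i, j) \<le> N - 1 \<longleftrightarrow> j < aa T i"
    and "T (i, j) \<le> N \<longleftrightarrow> j < pp T i"
    and "T (i, j) \<le> Suc N \<longleftrightarrow> j < bb T i"
  using rc_iff[OF T] d by (auto simp: aa_def pp_def bb_def diag_iff)

lemma row_bound: "(i, j) \<in> D \<Longrightarrow> 2 * i + 1 \<le> N"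
  using D_row_lt[of i j] len by auto

lemma BK_in:
  assumes T: "T \<in> SP" shows "BK T \<in> SP"
proof (rule spoI)
  fix c assume "c \<notin> D" then show "BK T c = 0"
    using spo_out[OF T] by (cases c) (auto simp: BK_def)
next
  fix c assume "c \<in> D" then show "1 \<le> BK T c \<and> BK T c \<le> Suc (Suc N)"
    using spo_range[OF T] N_eqs(3) by (cases c) (auto simp: BK_def)
next
  fix i j assume d: "(i, Suc j) \<in> D"
  have "T (i, j) \<le> T (i, Suc j)" using spo_row[OF T d] .
  moreover have "(i, j) \<in> D" using D_left[OF d] .
  ultimately show "BK T (i, j) \<le> BK T (i, Suc j)"
    using d by (auto simp: BK_def)
next
  fix i j assume d: "(Suc i, j) \<in> D"
  have d0: "(i, j) \<in> D" using D_up[OF d] .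
  have le: "T (i, j) \<le> T (Suc i, j)" using spo_col[OF T d] .
  have lt: "T (Suc i, j) \<le> Suc N \<Longrightarrow> T (i, j) < T (Suc i, j)" using spo_colstrict[OF T d] .
  have R: "BK T (i, j) \<le> BK T (Suc i, j) \<and> (BK T (Suc i, j) \<le> Suc N \<longrightarrow> BK T (i, j) < BK T (Suc i, j))"
  proof (cases "N \<le> T (i, j) \<and> T (i, j) \<le> Suc N \<and> N \<le> T (Suc i, j) \<and> T (Suc i, j) \<le> Suc N")
    case True
    then have x: "T (i, j) = N" and y: "T (Suc i, j) = Suc N" using lt by auto
    have "j < pp T i" using mid_iff(2)[OF T d0] x by simp
    have "\<not> j < pp T (Suc i)" "j < bb T (Suc i)" using mid_iff(2,3)[OF T d] y by auto
    have "\<not> j < aa T i" using mid_iff(1)[OF T d0] x N_eqs(3) by auto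
    have "j < pq T i" using chain(1,5)[OF T, of i] \<open>j < bb T (Suc i)\<close> by (auto simp: LL_def)
    moreover have "\<not> j < pq T (Suc i)" using chain(6)[OF T, of "Suc i"] \<open>\<not> j < aa T i\<close>
      by (auto simp: UU_def)
    ultimately show ?thesis using True d d0 by (auto simp: BK_def)
  next
    case False
    then show ?thesis using le lt d d0 by (auto simp: BK_def)
  qed
  show "BK T (i, j) \<le> BK T (Suc i, j)" using R by blast
  show "BK T (Suc i, j) \<le> Suc N \<Longrightarrow> BK T (i, j) < BK T (Suc i, j)" using R by blast
next
  fix i j assume d: "(i, j) \<in> D" "BK T (i, j) \<le> Suc N"
  then show "2 * i + 1 \<le> BK T (i, j)"
    using spo_rowcond[OF T d(1)] row_bound[OF d(1)] by (auto simp: BK_def split: if_splits)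
next
  fix i j assume d: "(i, Suc j) \<in> D" "Suc N < BK T (i, j)"
  have d0: "(i, j) \<in> D" using D_left[OF d(1)] .
  have "Suc N < T (i, j)" using d(2) d0 by (auto simp: BK_def split: if_splits)
  then have "T (i, j) < T (i, Suc j)" using spo_primed[OF T d(1)] by auto
  then show "BK T (i, j) < BK T (i, Suc j)" using d d0 \<open>Suc N < T (i, j)\<close> by (auto simp: BK_def)
qed

lemma BK_rc_same:
  assumes T: "T \<in> SP" and k: "k = N - 1 \<or> k = Suc N"
  shows "rc (BK T) k i = rc T k i"
proof -
  have "{j. j < lv lam i \<and> BK T (i, j) \<le> k} = {j. j < lv lam i \<and> T (i, j) \<le> k}"
    using k N_eqs(3) by (auto simp: BK_def diag_iff)
  then show ?thesis by (simp add: rc_def)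
qed

lemma BK_rc_N:
  assumes T: "T \<in> SP"
  shows "rc (BK T) N i = pq T i"
proof -
  have c: "aa T i \<le> pq T i" "pq T i \<le> bb T i" "bb T i \<le> lv lam i"
    using chain[OF T, of i] rc_le[of T "Suc N" i] by (auto simp: bb_def)
  have "{j. j < lv lam i \<and> BK T (i, j) \<le> N} = {..<pq T i}"
  proof (rule set_eqI, rule iffI)
    fix j assume "j \<in> {j. j < lv lam i \<and> BK T (i, j) \<le> N}"
    then have j: "j < lv lam i" "BK T (i, j) \<le> N" by auto
    then have d: "(i, j) \<in> D" by (simp add: diag_iff)
    show "j \<in> {..<pq T i}"
    proof (cases "N \<le> T (i, j) \<and> T (i, j) \<le> Suc N")
      case True then show ?thesis using j d by (auto simp: BK_def split: if_splits)
    next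
      case False
      then have "T (i, j) \<le> N - 1" using j d by (auto simp: BK_def)
      then show ?thesis using mid_iff(1)[OF T d] c by auto
    qed
  next
    fix j assume "j \<in> {..<pq T i}"
    then have j: "j < pq T i" by auto
    then have jl: "j < lv lam i" using c by auto
    then have d: "(i, j) \<in> D" by (simp add: diag_iff)
    have "T (i, j) \<le> Suc N" using mid_iff(3)[OF T d] j c by auto
    then have "BK T (i, j) \<le> N" using j d by (auto simp: BK_def)
    then show "j \<in> {j. j < lv lam i \<and> BK T (i, j) \<le> N}" using jl by auto
  qed
  then show ?thesis by (simp add: rc_def)
qed

lemma BK_abp:
  assumes T: "T \<in> SP"
  shows "aa (BK T) = aa T" "bb (BK T) = bb T" "pp (BK T) = pq T"
  using BK_rc_same[OF T] BK_rc_N[OF T] by (auto simp: aa_def bb_def pp_def)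

lemma BK_pq:
  assumes T: "T \<in> SP" shows "pq (BK T) = pp T"
proof
  fix i
  have "LL (BK T) i = LL T i" "UU (BK T) i = UU T i"
    using BK_abp[OF T] by (auto simp: LL_def UU_def)
  then show "pq (BK T) i = pp T i"
    using BK_abp(3)[OF T] chain[OF T, of i] by (auto simp: pq_def)
qed

lemma BK_BK:
  assumes T: "T \<in> SP" shows "BK (BK T) = T"
proof
  fix c :: "nat \<times> nat"
  obtain i j where c: "c = (i, j)" by (cases c)
  show "BK (BK T) c = T c"
  proof (cases "(i, j) \<in> D \<and> N \<le> T (i, j) \<and> T (i, j) \<le> Suc N")
    case True
    then have "(T (i, j) \<le> N) = (j < pp T i)" using mid_iff(2)[OF T] by auto
    have b1: "BK T (i, j) = (if j < pq T i then N else Suc N)" using True by (simp add: BK_def)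
    have b2: "N \<le> BK T (i, j) \<and> BK T (i, j) \<le> Suc N" using b1 by auto
    have "BK (BK T) (i, j) = (if j < pq (BK T) i then N else Suc N)"
      using b2 True unfolding BK_def[of "BK T"] by simp
    also have "\<dots> = (if j < pp T i then N else Suc N)" using BK_pq[OF T] by simp
    also have "\<dots> = T (i, j)" using \<open>(T (i, j) \<le> N) = (j < pp T i)\<close> True by auto
    finally show ?thesis using c by simp
  next
    case False
    then show ?thesis using c by (auto simp: BK_def)
  qed
qed


lemma cnt_rows:
  assumes T: "T \<in> SP" and k: "1 \<le> k"
  shows "int (cnt T lam k) = (\<Sum>i<length lam. int (rc T k i) - int (rc T (k - 1) i))"
proof -
  have "{c \<in> D. T c = k} = Sigma {..<length lam} (\<lambda>i. {j. j < lv lam i \<and> T (i, j) = k})"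
    by (auto simp: diag_iff lv_def diagram_def)
  then have "cnt T lam k = (\<Sum>i<length lam. card {j. j < lv lam i \<and> T (i, j) = k})"
    by (simp add: cnt_def card_SigmaI)
  moreover have "int (card {j. j < lv lam i \<and> T (i, j) = k}) = int (rc T k i) - int (rc T (k - 1) i)" for i
  proof -
    have e: "{j. j < lv lam i \<and> T (i, j) = k} =
      {j. j < lv lam i \<and> T (i, j) \<le> k} - {j. j < lv lam i \<and> T (i, j) \<le> k - 1}" using k by auto
    have sub: "{j. j < lv lam i \<and> T (i, j) \<le> k - 1} \<subseteq> {j. j < lv lam i \<and> T (i, j) \<le> k}" by auto
    have "card {j. j < lv lam i \<and> T (i, j) = k} = rc T k i - rc T (k - 1) i"
      unfolding e rc_def by (rule card_Diff_subset) (auto intro: finite_subset[OF sub])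
    moreover have "rc T (k - 1) i \<le> rc T k i" by (rule rc_mono) auto
    ultimately show ?thesis by simp
  qed
  ultimately show ?thesis by (simp add: of_nat_sum)
qed

lemma sum_LU:
  assumes T: "T \<in> SP"
  shows "(\<Sum>i<length lam. int (LL T i) + int (UU T i)) = (\<Sum>i<length lam. int (aa T i) + int (bb T i))"
proof -
  have "bb T (length lam) = 0" by (simp add: bb_def rc_out)
  then have "(\<Sum>i<length lam. LL T i + UU T i) = (\<Sum>i<length lam. aa T i + bb T i)"
    unfolding LL_def UU_def by (rule tele)
  then have "int (\<Sum>i<length lam. LL T i + UU T i) = int (\<Sum>i<length lam. aa T i + bb T i)" by simp
  then show ?thesis by (simp add: of_nat_sum)
qed

lemma int_pq:
  assumes T: "T \<in> SP" shows "int (pq T i) = int (LL T i) + int (UU T i) - int (pp T i)"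
  using chain[OF T, of i] by (simp add: pq_def of_nat_diff)

lemma cnt_BK_N:
  assumes T: "T \<in> SP" shows "cnt (BK T) lam N = cnt T lam (Suc N)"
proof -
  have B: "BK T \<in> SP" by (rule BK_in[OF T])
  have "int (cnt (BK T) lam N) = (\<Sum>i<length lam. int (pq T i) - int (aa T i))"
    using cnt_rows[OF B N_eqs(3)] BK_rc_N[OF T] BK_rc_same[OF T, of "N - 1"] by (simp add: aa_def)
  also have "\<dots> = (\<Sum>i<length lam. (int (LL T i) + int (UU T i)) - int (pp T i) - int (aa T i))"
    using int_pq[OF T] by simp
  also have "\<dots> = (\<Sum>i<length lam. int (LL T i) + int (UU T i)) - (\<Sum>i<length lam. int (pp T i))
       - (\<Sum>i<length lam. int (aa T i))" by (simp add: sum_subtractf)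
  also have "\<dots> = (\<Sum>i<length lam. int (bb T i) - int (pp T i))"
    using sum_LU[OF T] by (simp add: sum_subtractf sum.distrib)
  also have "\<dots> = int (cnt T lam (Suc N))"
    using cnt_rows[OF T, of "Suc N"] by (simp add: bb_def pp_def)
  finally show ?thesis by simp
qed

lemma cnt_BK_SN:
  assumes T: "T \<in> SP" shows "cnt (BK T) lam (Suc N) = cnt T lam N"
proof -
  have B: "BK T \<in> SP" by (rule BK_in[OF T])
  have "int (cnt (BK T) lam (Suc N)) = (\<Sum>i<length lam. int (bb T i) - int (pq T i))"
    using cnt_rows[OF B, of "Suc N"] BK_rc_N[OF T] BK_rc_same[OF T, of "Suc N"] by (simp add: bb_def)
  also have "\<dots> = (\<Sum>i<length lam. int (bb T i) - ((int (LL T i) + int (UU T i)) - int (pp T i)))"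
    using int_pq[OF T] by simp
  also have "\<dots> = (\<Sum>i<length lam. int (bb T i)) - (\<Sum>i<length lam. int (LL T i) + int (UU T i))
       + (\<Sum>i<length lam. int (pp T i))" by (simp add: sum_subtractf sum.distrib)
  also have "\<dots> = (\<Sum>i<length lam. int (pp T i) - int (aa T i))"
    using sum_LU[OF T] by (simp add: sum_subtractf sum.distrib)
  also have "\<dots> = int (cnt T lam N)"
    using cnt_rows[OF T N_eqs(3)] by (simp add: aa_def pp_def)
  finally show ?thesis by simp
qed

lemma cnt_BK_other:
  assumes "k \<noteq> N" "k \<noteq> Suc N" shows "cnt (BK T) lam k = cnt T lam k"
proof -
  have "{c \<in> D. BK T c = k} = {c \<in> D. T c = k}"
    using assms by (auto simp: BK_def split: if_splits)
  then show ?thesis by (simp add: cnt_def)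
qed


definition "hi T i = (\<exists>j. (i, j) \<in> D \<and> Suc N \<le> T (i, j))"
definition "rr T = (LEAST i. hi T i)"
definition "zz T = (rr T, lv lam (rr T) - 1)"
definition "TG T = T(zz T := (if T (zz T) = Suc N then Suc (Suc N) else Suc N))"
definition "XX = {T \<in> SP. \<exists>i. hi T i}"

lemma XX_facts:
  assumes X: "T \<in> XX"
  shows "hi T (rr T)" "\<And>i. i < rr T \<Longrightarrow> \<not> hi T i" "rr T < length lam"
    "0 < lv lam (rr T)" "zz T \<in> D" "(rr T, lv lam (rr T)) \<notin> D"
    "T (zz T) = Suc N \<or> T (zz T) = Suc (Suc N)"
proof -
  have T: "T \<in> SP" and ex: "\<exists>i. hi T i" using X by (auto simp: XX_def)
  show h: "hi T (rr T)" unfolding rr_def using ex by (rule LeastI_ex)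
  show "\<And>i. i < rr T \<Longrightarrow> \<not> hi T i" unfolding rr_def using not_less_Least by blast
  from h obtain j where j: "(rr T, j) \<in> D" "Suc N \<le> T (rr T, j)" by (auto simp: hi_def)
  show r: "rr T < length lam" using D_row_lt[OF j(1)] .
  show "0 < lv lam (rr T)" using j(1) by (auto simp: diag_iff)
  show z: "zz T \<in> D" using j(1) by (auto simp: zz_def diag_iff)
  show "(rr T, lv lam (rr T)) \<notin> D" by (simp add: diag_iff)
  have "T (rr T, j) \<le> T (zz T)" unfolding zz_def
    by (rule spo_rowmono[OF T]) (use j(1) in \<open>auto simp: diag_iff\<close>)
  moreover have "T (zz T) \<le> Suc (Suc N)" using spo_range[OF T] z by (auto simp: zz_def)
  ultimately show "T (zz T) = Suc N \<or> T (zz T) = Suc (Suc N)" using j(2) by auto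
qed

lemma hi_TG:
  assumes X: "T \<in> XX" shows "hi (TG T) = hi T"
proof
  fix i
  have z: "zz T \<in> D" "hi T (rr T)" using XX_facts[OF X] by auto
  show "hi (TG T) i = hi T i"
  proof (cases "i = rr T")
    case True
    then show ?thesis using z unfolding hi_def TG_def zz_def by (auto intro!: exI[of _ "lv lam (rr T) - 1"])
  next
    case False
    then show ?thesis unfolding hi_def TG_def zz_def by auto
  qed
qed

lemma TG_facts:
  assumes X: "T \<in> XX"
  shows "rr (TG T) = rr T" "zz (TG T) = zz T" "TG (TG T) = T" "TG T \<noteq> T"
proof -
  show r: "rr (TG T) = rr T" using hi_TG[OF X] by (simp add: rr_def)
  show z: "zz (TG T) = zz T" using r by (simp add: zz_def)
  have v: "T (zz T) = Suc N \<or> T (zz T) = Suc (Suc N)" using XX_facts(7)[OF X] .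
  have a: "TG T (zz T) = (if T (zz T) = Suc N then Suc (Suc N) else Suc N)" by (simp add: TG_def)
  have b: "(if TG T (zz T) = Suc N then Suc (Suc N) else Suc N) = T (zz T)" using a v by auto
  show "TG (TG T) = T" unfolding TG_def[of "TG T"] z b by (simp add: TG_def)
  show "TG T \<noteq> T" using a v by (metis n_not_Suc_n)
qed

lemma TG_in:
  assumes X: "T \<in> XX" shows "TG T \<in> XX"
proof -
  have T: "T \<in> SP" using X by (simp add: XX_def)
  define r where "r = rr T"
  define m where "m = lv lam r - 1"
  have zdef: "zz T = (r, m)" by (simp add: zz_def r_def m_def)
  have zD: "(r, m) \<in> D" using XX_facts(5)[OF X] zdef by simp
  have nR: "(r, Suc m) \<notin> D" using XX_facts(4,6)[OF X] by (simp add: r_def m_def)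
  have v: "T (r, m) = Suc N \<or> T (r, m) = Suc (Suc N)" using XX_facts(7)[OF X] zdef by simp
  have above: "\<And>i j. i < r \<Longrightarrow> (i, j) \<in> D \<Longrightarrow> T (i, j) \<le> N"
    using XX_facts(2)[OF X] unfolding hi_def r_def by (meson not_less_eq_eq)
  have left: "\<And>j. Suc j = m \<Longrightarrow> T (r, j) \<le> Suc N"
  proof -
    fix j assume "Suc j = m"
    then have d: "(r, Suc j) \<in> D" using zD by simp
    show "T (r, j) \<le> Suc N"
    proof (rule ccontr)
      assume "\<not> T (r, j) \<le> Suc N"
      then have "T (r, j) < T (r, Suc j)" "T (r, j) \<le> T (r, Suc j)" using spo_primed[OF T d] spo_row[OF T d] by auto
      then show False using v \<open>Suc j = m\<close> \<open>\<not> T (r, j) \<le> Suc N\<close> by auto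
    qed
  qed
  have below: "(Suc r, m) \<in> D \<Longrightarrow> T (Suc r, m) = Suc (Suc N)"
  proof -
    assume d: "(Suc r, m) \<in> D"
    have "T (r, m) \<le> T (Suc r, m)" "T (Suc r, m) \<le> Suc (Suc N)"
      using spo_col[OF T d] spo_range[OF T d] by auto
    moreover have "T (Suc r, m) \<le> Suc N \<Longrightarrow> T (r, m) < T (Suc r, m)" using spo_colstrict[OF T d] .
    ultimately have "Suc N \<le> T (Suc r, m)" "T (Suc r, m) \<noteq> Suc N" "T (Suc r, m) \<le> Suc (Suc N)"
      using v by auto
    then show ?thesis by linarith
  qed
  have rb: "2 * r + 1 \<le> N" using row_bound[OF zD] .
  have TGd: "TG T = T((r, m) := (if T (r, m) = Suc N then Suc (Suc N) else Suc N))"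
    by (simp add: TG_def zdef)
  have "TG T \<in> SP"
  proof (rule spoI)
    fix c assume "c \<notin> D" then show "TG T c = 0"
      using spo_out[OF T] zD by (cases c) (auto simp: TGd)
  next
    fix c assume "c \<in> D" then show "1 \<le> TG T c \<and> TG T c \<le> Suc (Suc N)"
      using spo_range[OF T] by (cases c) (auto simp: TGd)
  next
    fix i j assume d: "(i, Suc j) \<in> D"
    show "TG T (i, j) \<le> TG T (i, Suc j)"
      using spo_row[OF T d] nR left[of j] d by (auto simp: TGd)
  next
    fix i j assume d: "(Suc i, j) \<in> D"
    have d0: "(i, j) \<in> D" using D_up[OF d] .
    have R: "TG T (i, j) \<le> TG T (Suc i, j) \<and> (TG T (Suc i, j) \<le> Suc N \<longrightarrow> TG T (i, j) < TG T (Suc i, j))"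
    proof (cases "(Suc i, j) = (r, m)")
      case True
      then have "T (i, j) \<le> N" using above[of i j] d0 by auto
      then show ?thesis using True by (auto simp: TGd)
    next
      case False
      show ?thesis
      proof (cases "(i, j) = (r, m)")
        case True
        then show ?thesis using below d False by (auto simp: TGd)
      next
        case False2: False
        then show ?thesis using False spo_col[OF T d] spo_colstrict[OF T d] by (auto simp: TGd)
      qed
    qed
    show "TG T (i, j) \<le> TG T (Suc i, j)" using R by blast
    show "TG T (Suc i, j) \<le> Suc N \<Longrightarrow> TG T (i, j) < TG T (Suc i, j)" using R by blast
  next
    fix i j assume d: "(i, j) \<in> D" "TG T (i, j) \<le> Suc N"
    then show "2 * i + 1 \<le> TG T (i, j)" using spo_rowcond[OF T d(1)] rb
      by (cases "(i, j) = (r, m)") (auto simp: TGd split: if_splits)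
  next
    fix i j assume d: "(i, Suc j) \<in> D" "Suc N < TG T (i, j)"
    show "TG T (i, j) < TG T (i, Suc j)"
    proof (cases "(i, Suc j) = (r, m)")
      case True
      then have "T (i, j) \<le> Suc N" using left[of j] by auto
      then show ?thesis using True d(2) by (auto simp: TGd)
    next
      case False
      have "(i, j) \<noteq> (r, m)" using nR d(1) by auto
      then show ?thesis using False d spo_primed[OF T d(1)] by (auto simp: TGd)
    qed
  qed
  moreover have "\<exists>i. hi (TG T) i" using hi_TG[OF X] X by (auto simp: XX_def)
  ultimately show ?thesis by (simp add: XX_def)
qed


lemma finite_SP: "finite SP"
proof -
  have "SP \<subseteq> {f. \<forall>c. (c \<in> D \<longrightarrow> f c \<in> {..Suc (Suc N)}) \<and> (c \<notin> D \<longrightarrow> f c = 0)}"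
    using spo_out spo_range by fastforce
  moreover have "finite {f. \<forall>c. (c \<in> D \<longrightarrow> f c \<in> {..Suc (Suc N)}) \<and> (c \<notin> D \<longrightarrow> f c = 0)}"
    by (rule finite_set_of_finite_funs) (auto simp: finite_diagram)
  ultimately show ?thesis by (rule finite_subset)
qed

lemma odd_sub: "odd_sp_tableaux n lam \<subseteq> SP"
proof
  fix T assume T: "T \<in> odd_sp_tableaux n lam"
  show "T \<in> SP"
  proof (rule spoI)
    fix c assume "c \<notin> D" then show "T c = 0" using T by (cases c) (auto simp: odd_sp_tableaux_def)
  next
    fix c assume "c \<in> D" then show "1 \<le> T c \<and> T c \<le> Suc (Suc N)" using T by (auto simp: odd_sp_tableaux_def)
  next
    fix i j assume "(i, Suc j) \<in> D" then show "T (i, j) \<le> T (i, Suc j)" using T by (auto simp: odd_sp_tableaux_def)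
  next
    fix i j assume "(Suc i, j) \<in> D" then show "T (i, j) \<le> T (Suc i, j)" using T by (force simp: odd_sp_tableaux_def)
  next
    fix i j assume "(Suc i, j) \<in> D" then show "T (i, j) < T (Suc i, j)" using T by (auto simp: odd_sp_tableaux_def)
  next
    fix i j assume "(i, j) \<in> D" then show "2 * i + 1 \<le> T (i, j)" using T by (auto simp: odd_sp_tableaux_def)
  next
    fix i j assume "(i, Suc j) \<in> D" "Suc N < T (i, j)"
    then show "T (i, j) < T (i, Suc j)" using T D_left[of i j] by (fastforce simp: odd_sp_tableaux_def)
  qed
qed

lemma odd_iff:
  assumes T: "T \<in> SP" shows "T \<in> odd_sp_tableaux n lam \<longleftrightarrow> \<not> (\<exists>i. hi T i)"
proof
  assume "T \<in> odd_sp_tableaux n lam"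
  then show "\<not> (\<exists>i. hi T i)" by (auto simp: odd_sp_tableaux_def hi_def)
next
  assume h: "\<not> (\<exists>i. hi T i)"
  then have le: "\<And>i j. (i, j) \<in> D \<Longrightarrow> T (i, j) \<le> N" by (auto simp: hi_def not_le less_Suc_eq_le)
  show "T \<in> odd_sp_tableaux n lam"
    unfolding odd_sp_tableaux_def
  proof (intro CollectI conjI allI ballI impI)
    fix c assume "c \<notin> D" then show "T c = 0" using spo_out[OF T] by (cases c) auto
  next
    fix c assume "c \<in> D" then show "1 \<le> T c" "T c \<le> 2 * n - 1" using spo_range[OF T] le by (cases c; auto)+
  next
    fix i j assume "(i, Suc j) \<in> D" then show "T (i, j) \<le> T (i, Suc j)" using spo_row[OF T] by auto
  next
    fix i j assume d: "(Suc i, j) \<in> D"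
    then show "T (i, j) < T (Suc i, j)" using spo_colstrict[OF T d] le[OF d] by auto
  next
    fix i j assume d: "(i, j) \<in> D" then show "2 * i + 1 \<le> T (i, j)" using spo_rowcond[OF T d] le[OF d] by auto
  qed
qed

lemma diff_odd: "SP - odd_sp_tableaux n lam = XX"
  using odd_iff by (auto simp: XX_def)

lemma cnt_upd:
  assumes z: "z \<in> D" and u: "T z = u" and v: "v \<noteq> u"
  shows "int (cnt (T(z := v)) lam u) = int (cnt T lam u) - 1"
    "cnt (T(z := v)) lam v = cnt T lam v + 1"
    "k \<noteq> u \<Longrightarrow> k \<noteq> v \<Longrightarrow> cnt (T(z := v)) lam k = cnt T lam k"
proof -
  have f: "finite {c \<in> D. T c = k}" for k using finite_diagram by simp
  have e1: "{c \<in> D. (T(z := v)) c = u} = {c \<in> D. T c = u} - {z}" using v by auto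
  have zin: "z \<in> {c \<in> D. T c = u}" using z u by simp
  have c1: "card ({c \<in> D. T c = u} - {z}) = card {c \<in> D. T c = u} - 1"
    by (rule card_Diff_singleton[OF zin])
  have c2: "0 < card {c \<in> D. T c = u}" using f[of u] zin card_gt_0_iff by blast
  show "int (cnt (T(z := v)) lam u) = int (cnt T lam u) - 1"
    unfolding cnt_def e1 c1 using c2 by linarith
  have e2: "{c \<in> D. (T(z := v)) c = v} = insert z {c \<in> D. T c = v}" using z by auto
  have znin: "z \<notin> {c \<in> D. T c = v}" using u v by simp
  show "cnt (T(z := v)) lam v = cnt T lam v + 1"
    unfolding cnt_def e2 using card_insert_disjoint[OF f znin] by simp
  assume "k \<noteq> u" "k \<noteq> v"
  then have "{c \<in> D. (T(z := v)) c = k} = {c \<in> D. T c = k}" using u by auto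
  then show "cnt (T(z := v)) lam k = cnt T lam k" by (simp add: cnt_def)
qed

definition lw :: "(nat \<Rightarrow> 'a::field) \<Rightarrow> (nat \<times> nat \<Rightarrow> nat) \<Rightarrow> 'a" where
  "lw x T = (\<Prod>i\<in>{1..<n}. x i powi (int (cnt T lam (2 * i - 1)) - int (cnt T lam (2 * i))))"

lemma lw_eq: "(\<And>k. k < N \<Longrightarrow> cnt T' lam k = cnt T lam k) \<Longrightarrow> lw x T' = lw x T"
  unfolding lw_def by (rule prod.cong) auto

lemma spo_w:
  "spo_weight n 1 lam (\<lambda>i. if i = n then inverse (x n) else x i) (\<lambda>j. - inverse (x n)) T =
   lw x T * inverse (x n) powi (int (cnt T lam N) - int (cnt T lam (Suc N))) *
     (- inverse (x n)) ^ cnt T lam (Suc (Suc N))"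
proof -
  define f where "f i = (if i = n then inverse (x n) else x i) powi
          (int (cnt T lam (2 * i - 1)) - int (cnt T lam (2 * i)))" for i
  have e: "{1..n} = insert n {1..<n}" using n1 by auto
  have p1: "prod f {1..n} = f n * prod f {1..<n}" unfolding e by (rule prod.insert) auto
  have p2: "prod f {1..<n} = lw x T" unfolding lw_def f_def by (rule prod.cong) auto
  have h1: "cnt T lam (2 * n) = cnt T lam (Suc N)" by (rule arg_cong[OF N_eqs(1)])
  have h2: "cnt T lam (2 * n + 1) = cnt T lam (Suc (Suc N))" by (rule arg_cong[OF N_eqs(2)])
  have p3: "f n = inverse (x n) powi (int (cnt T lam N) - int (cnt T lam (Suc N)))"
    unfolding f_def h1 by simp
  have "spo_weight n 1 lam (\<lambda>i. if i = n then inverse (x n) else x i) (\<lambda>j. - inverse (x n)) T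
     = prod f {1..n} * (- inverse (x n)) ^ cnt T lam (2 * n + 1)"
    unfolding spo_weight_def f_def by simp
  also have "\<dots> = lw x T * inverse (x n) powi (int (cnt T lam N) - int (cnt T lam (Suc N))) *
     (- inverse (x n)) ^ cnt T lam (Suc (Suc N))"
    unfolding p1 p2 p3 h2 by (rule mult.commute[THEN arg_cong[where f="\<lambda>z. z * _"]])
  finally show ?thesis .
qed

lemma odd_w: "odd_sp_weight n lam x T = x n ^ cnt T lam N * lw x T"
  unfolding odd_sp_weight_def lw_def ..

lemma main:
  fixes x :: "nat \<Rightarrow> 'a::field"
  assumes xn: "x n \<noteq> 0"
  shows "odd_sp n lam x =
    spo n 1 lam (\<lambda>i. if i = n then inverse (x n) else x i) (\<lambda>j. - inverse (x n))"
proof -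
  define ix where "ix = inverse (x n)"
  have ix0: "ix \<noteq> 0" using xn by (simp add: ix_def)
  define g where "g T = lw x T * ix powi (int (cnt T lam (Suc N)) - int (cnt T lam N)) *
     (- ix) ^ cnt T lam (Suc (Suc N))" for T
  have sw: "spo_weight n 1 lam (\<lambda>i. if i = n then inverse (x n) else x i) (\<lambda>j. - inverse (x n)) (BK T) = g T"
    if T: "T \<in> SP" for T
  proof -
    have "lw x (BK T) = lw x T" by (rule lw_eq) (rule cnt_BK_other, auto)
    moreover have "cnt (BK T) lam (Suc (Suc N)) = cnt T lam (Suc (Suc N))" by (rule cnt_BK_other) auto
    ultimately show ?thesis unfolding spo_w g_def ix_def using cnt_BK_N[OF T] cnt_BK_SN[OF T] by simp
  qed
  have bij: "bij_betw BK SP SP"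
    apply (rule bij_betwI[of _ _ _ BK])
       apply (rule funcsetI, erule BK_in)+
     apply (erule BK_BK)+
    done
  have "spo n 1 lam (\<lambda>i. if i = n then inverse (x n) else x i) (\<lambda>j. - inverse (x n))
      = (\<Sum>T\<in>SP. spo_weight n 1 lam (\<lambda>i. if i = n then inverse (x n) else x i) (\<lambda>j. - inverse (x n)) (BK T))"
    unfolding spo_def by (rule sum.reindex_bij_betw[OF bij, symmetric])
  also have "\<dots> = (\<Sum>T\<in>SP. g T)" using sw by (rule sum.cong[OF refl])
  also have "\<dots> = (\<Sum>T\<in>SP - odd_sp_tableaux n lam. g T) + (\<Sum>T\<in>odd_sp_tableaux n lam. g T)"
    by (rule sum.subset_diff[OF odd_sub finite_SP])
  also have "(\<Sum>T\<in>SP - odd_sp_tableaux n lam. g T) = 0"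
    unfolding diff_odd
  proof (rule sum_involution_eq_0[where h = TG])
    have case1: "g (TG T) + g T = 0" if X: "T \<in> XX" and zv: "T (zz T) = Suc N" for T
    proof -
      have TGd: "TG T = T(zz T := Suc (Suc N))" using zv by (simp add: TG_def)
      have z: "zz T \<in> D" using XX_facts(5)[OF X] .
      have neq: "Suc (Suc N) \<noteq> Suc N" by simp
      note cu = cnt_upd[where z="zz T" and T=T and u="Suc N" and v="Suc (Suc N)", OF z zv neq]
      have l: "lw x (TG T) = lw x T" unfolding TGd by (rule lw_eq) (rule cu(3), auto)
      have cN: "cnt (TG T) lam N = cnt T lam N" unfolding TGd by (rule cu(3)) auto
      have "g (TG T) = lw x T * ix powi ((int (cnt T lam (Suc N)) - int (cnt T lam N)) - 1) *
          ((- ix) ^ cnt T lam (Suc (Suc N)) * (- ix))"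
      proof -
        have e1: "int (cnt (TG T) lam (Suc N)) - int (cnt (TG T) lam N)
            = (int (cnt T lam (Suc N)) - int (cnt T lam N)) - 1" using cu(1) cN TGd by simp
        have e2: "cnt (TG T) lam (Suc (Suc N)) = Suc (cnt T lam (Suc (Suc N)))" using cu(2) TGd by simp
        show ?thesis unfolding g_def l e1 e2 power_Suc by (simp only: mult_ac)
      qed
      also have "\<dots> = - g T" unfolding g_def by (rule aux_sign[OF ix0])
      finally show ?thesis by simp
    qed
    fix T assume X: "T \<in> XX"
    show "TG T \<in> XX" using TG_in[OF X] .
    show "TG (TG T) = T" "TG T \<noteq> T" using TG_facts[OF X] by auto
    have v: "T (zz T) = Suc N \<or> T (zz T) = Suc (Suc N)" using XX_facts(7)[OF X] .
    show "g (TG T) + g T = 0"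
    proof (cases "T (zz T) = Suc N")
      case True then show ?thesis using case1[OF X] by simp
    next
      case False
      then have "TG T (zz (TG T)) = Suc N" using TG_facts(2)[OF X] by (simp add: TG_def)
      then have "g (TG (TG T)) + g (TG T) = 0" using case1[OF TG_in[OF X]] by simp
      then show ?thesis using TG_facts(3)[OF X] by (simp add: add.commute)
    qed
  qed
  also have "(\<Sum>T\<in>odd_sp_tableaux n lam. g T) = (\<Sum>T\<in>odd_sp_tableaux n lam. odd_sp_weight n lam x T)"
  proof (rule sum.cong[OF refl])
    fix T assume T: "T \<in> odd_sp_tableaux n lam"
    have e: "{c \<in> D. T c = Suc N} = {}" "{c \<in> D. T c = Suc (Suc N)} = {}"
      using T by (fastforce simp: odd_sp_tableaux_def)+
    have "cnt T lam (Suc N) = 0" "cnt T lam (Suc (Suc N)) = 0"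
      unfolding cnt_def e card.empty by (rule refl)+
    then have "g T = lw x T * inverse (x n) powi (- int (cnt T lam N))" unfolding g_def ix_def by simp
    also have "\<dots> = odd_sp_weight n lam x T" unfolding odd_w aux_inv by (rule mult.commute)
    finally show "g T = odd_sp_weight n lam x T" .
  qed
  finally show ?thesis by (simp add: odd_sp_def)
qed

end

theorem corollary2:
  fixes n :: nat and lam :: "nat list" and x :: "nat \<Rightarrow> 'a::field"
  assumes "1 \<le> n" and "is_partition lam" and "length lam \<le> n"
    and "\<forall>i\<in>{1..n}. x i \<noteq> 0"
  shows "odd_sp n lam x =
    spo n 1 lam (\<lambda>i. if i = n then inverse (x n) else x i) (\<lambda>j. - inverse (x n))"
proof -
  interpret Stp n lam using assms(1-3) by unfold_locales
  have xn: "x n \<noteq> 0" using assms(1,4) by simp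
  show ?thesis by (rule main[where x=x, OF xn])
qed

end
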